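(* Let $\bar P_1,\bar P_2>0$ and $0<h_1\le h_2$. For $\mathbf P=(P_1,P_2)$ with $0\le P_k\le\bar P_k$ let $$R(\mathbf P)=\tfrac12\big[\log(1+P_1)+\log(1+P_2)-\log(1+h_1P_1+h_2P_2)\big]^+ .$$ Then the following allocation maximizes $R$ over $[0,\bar P_1]\times[0,\bar P_2]$: $$(P^*_1,P^*_2)=\begin{cases}(\bar P_1,\bar P_2),&\text{if } h_1\le1+h_2\bar P_2\text{ and }h_2<1+h_1\bar P_1,\\(\bar P_1,0),&\text{if } h_1<1\text{ and }h_2\ge1+h_1\bar P_1,\\(0,0),&\text{otherwise.}\end{cases}$$
   Context: $\log$ base 2, $[x]^+=\max\{x,0\}$. $R(\mathbf P)$ is the secrecy sum-rate bound of the superposition region of the standardized Gaussian two-way wire-tap channel, with $h_1,h_2$ the standardized eavesdropper gains of terminals 1 and 2. *)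

theory Defs
  imports Complex_Main
begin

definition secR :: "real \<Rightarrow> real \<Rightarrow> real \<Rightarrow> real \<Rightarrow> real" where
  "secR h1 h2 P1 P2 =
     (1/2) * max (log 2 (1 + P1) + log 2 (1 + P2) - log 2 (1 + h1 * P1 + h2 * P2)) 0"

definition opt_alloc :: "real \<Rightarrow> real \<Rightarrow> real \<Rightarrow> real \<Rightarrow> real \<times> real" where
  "opt_alloc h1 h2 Pb1 Pb2 =
     (if h1 \<le> 1 + h2 * Pb2 \<and> h2 < 1 + h1 * Pb1 then (Pb1, Pb2)
      else if h1 < 1 \<and> h2 \<ge> 1 + h1 * Pb1 then (Pb1, 0)
      else (0, 0))"

end

theory Submission
  imports Defs
begin

lemma lin_max:
  fixes a b t T :: real
  assumes "0 \<le> t" "t \<le> T"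
  shows "a + t*b \<le> max a (a + T*b)"
proof (cases "b \<ge> 0")
  case True
  then have "t*b \<le> T*b" using assms by (simp add: mult_right_mono)
  then show ?thesis by simp
next
  case False
  then have "t*b \<le> 0" using assms by (simp add: mult_nonneg_nonpos)
  then show ?thesis by simp
qed

lemma corners:
  fixes M h1 h2 Pb1 Pb2 P1 P2 :: real
  defines "F \<equiv> (\<lambda>x y. (1+x)*(1+y) - M*(1+h1*x+h2*y))"
  assumes "0\<le>P1" "P1\<le>Pb1" "0\<le>P2" "P2\<le>Pb2"
    and c00: "F 0 0 \<le> 0" and c10: "F Pb1 0 \<le> 0" and c01: "F 0 Pb2 \<le> 0" and c11: "F Pb1 Pb2 \<le> 0"
  shows "F P1 P2 \<le> 0"
proof -
  have X: "F x y \<le> max (F 0 y) (F Pb1 y)" if "0\<le>x" "x\<le>Pb1" for x y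
  proof -
    have "F x y = F 0 y + x*((1+y) - M*h1)" "F Pb1 y = F 0 y + Pb1*((1+y) - M*h1)"
      unfolding F_def by (simp_all add: algebra_simps)
    then show ?thesis using lin_max[OF that] by simp
  qed
  have Y: "F x y \<le> max (F x 0) (F x Pb2)" if "0\<le>y" "y\<le>Pb2" for x y
  proof -
    have "F x y = F x 0 + y*((1+x) - M*h2)" "F x Pb2 = F x 0 + Pb2*((1+x) - M*h2)"
      unfolding F_def by (simp_all add: algebra_simps)
    then show ?thesis using lin_max[OF that] by simp
  qed
  have "F 0 P2 \<le> 0" using Y[of P2 0] assms c00 c01 by simp
  moreover have "F Pb1 P2 \<le> 0" using Y[of P2 Pb1] assms c10 c11 by simp
  ultimately show ?thesis using X[of P1 P2] assms by simp
qed

lemma secR_alt: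
  assumes "0 \<le> P1" "0 \<le> P2" "0 \<le> h1" "0 \<le> h2"
  shows "secR h1 h2 P1 P2 = (1/2) * max (log 2 ((1+P1)*(1+P2)/(1+h1*P1+h2*P2))) 0"
proof -
  have "0 < 1+h1*P1+h2*P2" using assms by (simp add: add_pos_nonneg)
  then show ?thesis unfolding secR_def using assms
    by (simp add: log_mult log_divide)
qed

lemma compare:
  fixes P1 P2 Q1 Q2 h1 h2 :: real
  assumes "0 \<le> P1" "0 \<le> P2" "0 \<le> h1" "0 \<le> h2" "0 \<le> Q1" "0 \<le> Q2"
    and M: "M = max ((1+Q1)*(1+Q2)/(1+h1*Q1+h2*Q2)) 1"
    and le: "(1+P1)*(1+P2) - M*(1+h1*P1+h2*P2) \<le> 0"
  shows "secR h1 h2 P1 P2 \<le> secR h1 h2 Q1 Q2"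
proof -
  have D: "0 < 1+h1*P1+h2*P2" using assms by (simp add: add_pos_nonneg)
  have DQ: "0 < 1+h1*Q1+h2*Q2" using assms by (simp add: add_pos_nonneg)
  have gP: "(1+P1)*(1+P2)/(1+h1*P1+h2*P2) \<le> M" using le D by (simp add: divide_le_eq)
  have gpos: "0 < (1+P1)*(1+P2)/(1+h1*P1+h2*P2)" using D assms by simp
  have gQ: "0 < (1+Q1)*(1+Q2)/(1+h1*Q1+h2*Q2)" using DQ assms by simp
  show ?thesis
  proof (cases "(1+Q1)*(1+Q2)/(1+h1*Q1+h2*Q2) \<le> 1")
    case True
    then have "M = 1" using M by simp
    then have "log 2 ((1+P1)*(1+P2)/(1+h1*P1+h2*P2)) \<le> 0" using gP gpos by simp
    then show ?thesis using secR_alt[of P1 P2 h1 h2] secR_alt[of Q1 Q2 h1 h2] assms by simp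
  next
    case False
    then have "M = (1+Q1)*(1+Q2)/(1+h1*Q1+h2*Q2)" using M by simp
    then have "log 2 ((1+P1)*(1+P2)/(1+h1*P1+h2*P2)) \<le> log 2 ((1+Q1)*(1+Q2)/(1+h1*Q1+h2*Q2))"
      using gP gpos by simp
    then show ?thesis using secR_alt[of P1 P2 h1 h2] secR_alt[of Q1 Q2 h1 h2] assms by simp
  qed
qed

lemma ratio:
  fixes M D N d n :: real
  assumes "M*D \<ge> N" "N*d \<ge> n*D" "D > 0" "d \<ge> 0"
  shows "n - M*d \<le> 0"
proof -
  have "(M*D)*d \<ge> N*d" using assms by (simp add: mult_right_mono)
  moreover have "D*(M*d) = (M*D)*d" "D*n = n*D" by (simp_all add: algebra_simps)
  ultimately have "D*(M*d) \<ge> D*n" using assms by linarith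
  then have "n \<le> M*d" using assms(3) by (meson mult_left_le_imp_le)
  then show ?thesis by simp
qed

lemma viaone:
  fixes M D n :: real
  assumes "M \<ge> 1" "D \<ge> 0" "n \<le> D"
  shows "n - M*D \<le> 0"
proof -
  have "1*D \<le> M*D" using assms by (intro mult_right_mono) auto
  then show ?thesis using assms by simp
qed

theorem theorem4:
  fixes Pb1 Pb2 h1 h2 :: real
  assumes "Pb1 > 0" and "Pb2 > 0" and "0 < h1" and "h1 \<le> h2"
  shows "fst (opt_alloc h1 h2 Pb1 Pb2) \<in> {0..Pb1} \<and> snd (opt_alloc h1 h2 Pb1 Pb2) \<in> {0..Pb2} \<and>
         (\<forall>P1 \<in> {0..Pb1}. \<forall>P2 \<in> {0..Pb2}.
            secR h1 h2 P1 P2 \<le> secR h1 h2 (fst (opt_alloc h1 h2 Pb1 Pb2)) (snd (opt_alloc h1 h2 Pb1 Pb2)))"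
proof -
  define Q1 where "Q1 = fst (opt_alloc h1 h2 Pb1 Pb2)"
  define Q2 where "Q2 = snd (opt_alloc h1 h2 Pb1 Pb2)"
  define M where "M = max ((1+Q1)*(1+Q2)/(1+h1*Q1+h2*Q2)) 1"
  have Qr: "Q1 \<in> {0..Pb1}" "Q2 \<in> {0..Pb2}"
    using assms unfolding Q1_def Q2_def opt_alloc_def by auto
  have DQ: "0 < 1+h1*Q1+h2*Q2" using assms Qr by (simp add: add_pos_nonneg)
  have Mge: "M \<ge> 1" "M*(1+h1*Q1+h2*Q2) \<ge> (1+Q1)*(1+Q2)"
    using DQ unfolding M_def by (auto simp: divide_le_eq max_def)
  have cor: "(1+x)*(1+y) - M*(1+h1*x+h2*y) \<le> 0" if "x \<in> {0,Pb1}" "y \<in> {0,Pb2}" for x y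
  proof -
    have pos: "0 \<le> h1*Pb1" "0 \<le> h2*Pb2" using assms by simp_all
    consider (A) "h1 \<le> 1 + h2 * Pb2 \<and> h2 < 1 + h1 * Pb1"
      | (B) "\<not>(h1 \<le> 1 + h2 * Pb2 \<and> h2 < 1 + h1 * Pb1)" "h1 < 1 \<and> h2 \<ge> 1 + h1 * Pb1"
      | (C) "\<not>(h1 \<le> 1 + h2 * Pb2 \<and> h2 < 1 + h1 * Pb1)" "\<not>(h1 < 1 \<and> h2 \<ge> 1 + h1 * Pb1)"
      by blast
    then show ?thesis
    proof cases
      case A
      then have Q: "Q1 = Pb1" "Q2 = Pb2" unfolding Q1_def Q2_def opt_alloc_def by auto
      have e1: "(1+Pb1)*(1+Pb2)*(1+h2*Pb2) \<ge> (1+Pb2)*(1+h1*Pb1+h2*Pb2)"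
      proof -
        have "Pb1*(1+h2*Pb2-h1) \<ge> 0" using A assms by simp
        then have "(1+Pb1)*(1+h2*Pb2) \<ge> 1+h1*Pb1+h2*Pb2" by (simp add: algebra_simps)
        then have "(1+Pb2)*((1+Pb1)*(1+h2*Pb2)) \<ge> (1+Pb2)*(1+h1*Pb1+h2*Pb2)"
          using assms by (intro mult_left_mono) auto
        then show ?thesis by (simp add: algebra_simps)
      qed
      have e2: "(1+Pb1)*(1+Pb2)*(1+h1*Pb1) \<ge> (1+Pb1)*(1+h1*Pb1+h2*Pb2)"
      proof -
        have "Pb2*(1+h1*Pb1-h2) \<ge> 0" using A assms by simp
        then have "(1+Pb2)*(1+h1*Pb1) \<ge> 1+h1*Pb1+h2*Pb2" by (simp add: algebra_simps)
        then have "(1+Pb1)*((1+Pb2)*(1+h1*Pb1)) \<ge> (1+Pb1)*(1+h1*Pb1+h2*Pb2)"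
          using assms by (intro mult_left_mono) auto
        then show ?thesis by (simp add: algebra_simps)
      qed
      show ?thesis using that
      proof (elim insertE emptyE; simp only:)
        show "(1 + 0) * (1 + 0) - M * (1 + h1 * 0 + h2 * 0) \<le> 0" using Mge by simp
        show "(1 + Pb1) * (1 + Pb2) - M * (1 + h1 * Pb1 + h2 * Pb2) \<le> 0" using Mge Q by simp
        show "(1 + 0) * (1 + Pb2) - M * (1 + h1 * 0 + h2 * Pb2) \<le> 0"
          using ratio[OF Mge(2) _ DQ, where d="1+h2*Pb2" and n="1+Pb2"] e1 Q pos by simp
        show "(1 + Pb1) * (1 + 0) - M * (1 + h1 * Pb1 + h2 * 0) \<le> 0"
          using ratio[OF Mge(2) _ DQ, where d="1+h1*Pb1" and n="1+Pb1"] e2 Q pos by simp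
      qed
    next
      case B
      then have Q: "Q1 = Pb1" "Q2 = 0" unfolding Q1_def Q2_def opt_alloc_def by auto
      have e: "(1+Pb1)*(1+h1*Pb1+h2*Pb2) \<ge> (1+Pb1)*(1+Pb2)*(1+h1*Pb1)"
      proof -
        have "Pb2*(h2-1-h1*Pb1) \<ge> 0" using B assms by simp
        then have "(1+Pb2)*(1+h1*Pb1) \<le> 1+h1*Pb1+h2*Pb2" by (simp add: algebra_simps)
        then have "(1+Pb1)*((1+Pb2)*(1+h1*Pb1)) \<le> (1+Pb1)*(1+h1*Pb1+h2*Pb2)"
          using assms by (intro mult_left_mono) auto
        then show ?thesis by (simp add: algebra_simps)
      qed
      have h2: "h2 \<ge> 1" using B pos by linarith
      show ?thesis using that
      proof (elim insertE emptyE; simp only:)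
        show "(1 + 0) * (1 + 0) - M * (1 + h1 * 0 + h2 * 0) \<le> 0" using Mge by simp
        show "(1 + Pb1) * (1 + 0) - M * (1 + h1 * Pb1 + h2 * 0) \<le> 0" using Mge Q by simp
        show "(1 + Pb1) * (1 + Pb2) - M * (1 + h1 * Pb1 + h2 * Pb2) \<le> 0"
          using ratio[OF Mge(2) _ DQ, where d="1+h1*Pb1+h2*Pb2" and n="(1+Pb1)*(1+Pb2)"] e Q pos by simp
        show "(1 + 0) * (1 + Pb2) - M * (1 + h1 * 0 + h2 * Pb2) \<le> 0"
          using viaone[OF Mge(1), where D="1+h2*Pb2" and n="1+Pb2"] h2 assms pos mult_right_mono[OF h2, of Pb2] by simp
      qed
    next
      case C
      have h1: "h1 \<ge> 1" using C pos assms by linarith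
      have h2: "h2 \<ge> 1" using h1 assms by linarith
      have key: "(1+Pb1)*(1+Pb2) \<le> 1+h1*Pb1+h2*Pb2"
      proof (cases "h1 > 1 + h2*Pb2")
        case True
        have "Pb1*(1-h1+Pb2) \<le> Pb1*(Pb2*(1-h2))"
          using True assms by (intro mult_left_mono) (auto simp: algebra_simps)
        moreover have "Pb1*(Pb2*(1-h2)) \<le> 0" using h2 assms
          by (intro mult_nonneg_nonpos) auto
        moreover have "Pb2*(1-h2) \<le> 0" using h2 assms by (intro mult_nonneg_nonpos) auto
        ultimately show ?thesis by (simp add: algebra_simps)
      next
        case False
        then have hh: "h2 \<ge> 1 + h1*Pb1" using C by auto
        have "Pb2*(1-h2+Pb1) \<le> Pb2*(Pb1*(1-h1))"
          using hh assms by (intro mult_left_mono) (auto simp: algebra_simps)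
        moreover have "Pb2*(Pb1*(1-h1)) \<le> 0" using h1 assms
          by (intro mult_nonneg_nonpos) auto
        moreover have "Pb1*(1-h1) \<le> 0" using h1 assms by (intro mult_nonneg_nonpos) auto
        ultimately show ?thesis by (simp add: algebra_simps)
      qed
      have m1: "Pb1 \<le> h1*Pb1" "Pb2 \<le> h2*Pb2"
        using mult_right_mono[OF h1, of Pb1] mult_right_mono[OF h2, of Pb2] assms by auto
      have "0 \<le> 1+h1*x+h2*y" "(1+x)*(1+y) \<le> 1+h1*x+h2*y"
        using that pos key m1 by auto
      then show ?thesis using viaone[OF Mge(1)] by blast
    qed
  qed
  have "secR h1 h2 P1 P2 \<le> secR h1 h2 Q1 Q2" if "P1 \<in> {0..Pb1}" "P2 \<in> {0..Pb2}" for P1 P2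
  proof (rule compare[OF _ _ _ _ _ _ M_def])
    show "(1+P1)*(1+P2) - M*(1+h1*P1+h2*P2) \<le> 0"
      using corners[of P1 Pb1 P2 Pb2 M h1 h2] that cor[of 0 0] cor[of Pb1 0] cor[of 0 Pb2] cor[of Pb1 Pb2]
      by (simp only: atLeastAtMost_iff insert_iff simp_thms)
  qed (use that assms Qr in auto)
  then show ?thesis using Qr unfolding Q1_def Q2_def by blast
qed

end
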